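(* Let $\pi=\langle x,y,t \mid txt^{-1}=xyx^2,\ tyt^{-1}=x^{-1}\rangle$ (the fundamental group of the figure eight knot exterior) and $F=\langle x,y\rangle\le\pi$. Then the set $\{(\operatorname{tr}\rho(x),\operatorname{tr}\rho(y),\operatorname{tr}\rho(xy)) : \rho:\pi\to SL_2(\mathbb{C}) \text{ a homomorphism}\}$ equals $X_0=\{(a,a,\tfrac{a}{a-1}) : a\in\mathbb{C},\ a\neq 1\}$.
   Context: $\operatorname{tr}$ denotes the trace of a $2\times 2$ matrix. $F$ is a free group of rank two on $x,y$. *)

theory Defs
  imports "HOL-Analysis.Analysis"
begin

definition SL2 :: "(complex^2^2) set" where
  "SL2 = {A. det A = 1}"

text \<open>A homomorphism rho from pi = < x,y,t | t x t^-1 = x y x^2, t y t^-1 = x^-1 > to SL_2(C)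
  is the same as a choice of images X = rho(x), Y = rho(y), T = rho(t) in SL_2(C)
  satisfying the two defining relations (universal property of a presentation).\<close>
definition fig8_rep :: "complex^2^2 \<Rightarrow> complex^2^2 \<Rightarrow> complex^2^2 \<Rightarrow> bool" where
  "fig8_rep X Y T \<longleftrightarrow> X \<in> SL2 \<and> Y \<in> SL2 \<and> T \<in> SL2 \<and>
     T ** X ** matrix_inv T = X ** Y ** X ** X \<and>
     T ** Y ** matrix_inv T = matrix_inv X"

end

theory Submission imports Defs begin

definition M :: "complex \<Rightarrow> complex \<Rightarrow> complex \<Rightarrow> complex \<Rightarrow> complex^2^2" where
  "M a b c d = (\<chi> i j. if i = 1 then (if j = 1 then a else b) else (if j = 1 then c else d))"

lemma M_nth [simp]: "M a b c d $ 1 $ 1 = a" "M a b c d $ 1 $ 2 = b" "M a b c d $ 2 $ 1 = c" "M a b c d $ 2 $ 2 = d"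
  by (simp_all add: M_def)

lemma M_eq_iff: "M a b c d = M e f g h \<longleftrightarrow> a = e \<and> b = f \<and> c = g \<and> d = h"
  by (auto simp: vec_eq_iff forall_2 M_def)

lemma M_eta: "A = M (A$1$1) (A$1$2) (A$2$1) (A$2$2)"
  by (simp add: vec_eq_iff forall_2)

lemma M_mult [simp]: "M a b c d ** M e f g h = M (a*e+b*g) (a*f+b*h) (c*e+d*g) (c*f+d*h)"
  by (simp add: vec_eq_iff forall_2 matrix_matrix_mult_def sum_2)

lemma M_det [simp]: "det (M a b c d) = a*d - b*c"
  by (simp add: det_2)

lemma M_trace [simp]: "trace (M a b c d) = a + d"
  by (simp add: trace_def sum_2)

lemma M_one: "mat 1 = M 1 0 0 1"
  by (simp add: vec_eq_iff forall_2 mat_def)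

lemma M_inv: assumes "a*d - b*c = 1" shows "matrix_inv (M a b c d) = M d (-b) (-c) a"
proof -
  let ?A = "M a b c d" and ?B = "M d (-b) (-c) a"
  have AB: "?A ** ?B = mat 1" "?B ** ?A = mat 1" using assms
    by (simp_all add: M_one M_eq_iff algebra_simps)
  hence ex: "\<exists>A'. ?A ** A' = mat 1 \<and> A' ** ?A = mat 1" by blast
  have "?A ** matrix_inv ?A = mat 1 \<and> matrix_inv ?A ** ?A = mat 1"
    unfolding matrix_inv_def by (rule someI_ex[OF ex])
  thus ?thesis using AB by (metis matrix_mul_assoc matrix_mul_lid matrix_mul_rid)
qed

lemma inv_props: fixes T :: "complex^2^2" assumes "det T = 1"
  shows "T ** matrix_inv T = mat 1" "matrix_inv T ** T = mat 1"
proof -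
  obtain a b c d where T: "T = M a b c d" by (metis M_eta)
  have d: "a*d - b*c = 1" using assms T by simp
  show "T ** matrix_inv T = mat 1" "matrix_inv T ** T = mat 1"
    using d unfolding T M_inv[OF d] by (simp_all add: M_one M_eq_iff algebra_simps)
qed

lemma conj_trace: fixes T :: "complex^2^2" assumes "det T = 1"
  shows "trace (T ** A ** matrix_inv T) = trace A"
proof -
  have "trace (T ** A ** matrix_inv T) = trace (matrix_inv T ** (T ** A))"
    by (rule trace_mul_sym)
  also have "\<dots> = trace A" using inv_props[OF assms] by (simp add: matrix_mul_assoc)
  finally show ?thesis .
qed

lemma forward:
  assumes "fig8_rep X Y T"
  shows "trace X \<noteq> 1 \<and> trace Y = trace X \<and> trace (X ** Y) = trace X / (trace X - 1)"
proof -
  have dX: "det X = 1" and dY: "det Y = 1" and dT: "det T = 1"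
    and r1: "T ** X ** matrix_inv T = X ** Y ** X ** X"
    and r2: "T ** Y ** matrix_inv T = matrix_inv X"
    using assms by (auto simp: fig8_rep_def SL2_def)
  obtain x1 x2 x3 x4 where X: "X = M x1 x2 x3 x4" by (metis M_eta)
  obtain y1 y2 y3 y4 where Y: "Y = M y1 y2 y3 y4" by (metis M_eta)
  have dx: "x1*x4 - x2*x3 = 1" using dX X by simp
  have e1: "trace Y = trace X"
    using conj_trace[OF dT, of Y] r2 unfolding X by (simp add: M_inv[OF dx] add.commute)
  have ip: "matrix_inv T ** T = mat 1" "T ** matrix_inv T = mat 1" using inv_props[OF dT] by auto
  have "T ** (X ** Y) ** matrix_inv T = (T ** X ** matrix_inv T) ** (T ** Y ** matrix_inv T)"
  proof -
    have "(T ** X ** matrix_inv T) ** (T ** Y ** matrix_inv T) = T ** X ** (matrix_inv T ** T) ** Y ** matrix_inv T"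
      by (simp add: matrix_mul_assoc)
    thus ?thesis using ip by (simp add: matrix_mul_assoc)
  qed
  also have "\<dots> = X ** Y ** X ** X ** matrix_inv X" using r1 r2 by simp
  also have "\<dots> = X ** Y ** X" using inv_props[of X] dX by (simp flip: matrix_mul_assoc)
  finally have "trace (X ** Y) = trace (X ** Y ** X)" using conj_trace[OF dT, of "X ** Y"] by simp
  hence e2: "trace (X ** Y) * (trace X - 1) = trace X"
    using e1 dx unfolding X Y by simp algebra
  have ne: "trace X \<noteq> 1" using e2 by auto
  show ?thesis using e1 e2 ne by (simp add: field_simps)
qed

lemma backward: fixes a :: complex assumes a1: "a \<noteq> 1"
  shows "\<exists>X Y T. fig8_rep X Y T \<and> trace X = a \<and> trace Y = a \<and> trace (X ** Y) = a / (a - 1)"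
proof -
  define q where "q = csqrt (a^2 - 4)"
  have q2: "q^2 = a^2 - 4" unfolding q_def by (rule power2_csqrt)
  define l where "l = (a + q) / 2"
  define n where "n = (a - q) / 2"
  have ln: "l * n = 1" unfolding l_def n_def using q2 by (simp add: field_simps power2_eq_square)
  have lna: "l + n = a" unfolding l_def n_def by (simp add: field_simps)
  define c where "c = a / (a - 1)"
  have cc: "c * (l + n - 1) = l + n" using a1 lna unfolding c_def by (simp add: field_simps)
  define r where "r = c - l^2 - n^2"
  show ?thesis
  proof (cases "r = 0")
    case True
    have c2: "c = l^2 + n^2" using True unfolding r_def by (simp add: algebra_simps)
    have "(l - 1) * (l^5 - 1) = 0" using cc c2 ln by algebra
    hence l5: "l^5 = 1" by auto
    let ?X = "M l 0 0 n" and ?T = "M 0 1 (-1) 0"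
    have inv: "matrix_inv ?X = M n 0 0 l" using M_inv[of l n 0 0] ln by simp
    have invT: "matrix_inv ?T = M 0 (-1) 1 0" using M_inv[of 0 0 1 "-1"] by simp
    have "fig8_rep ?X ?X ?T"
      unfolding fig8_rep_def SL2_def using ln l5
      by (simp add: inv invT M_eq_iff) algebra
    moreover have "trace ?X = a" "trace (?X ** ?X) = c" using lna c2 by (simp_all add: power2_eq_square)
    ultimately show ?thesis unfolding c_def by blast
  next
    case False
    have l0: "l \<noteq> 0" using ln by auto
    define \<sigma> where "\<sigma> = csqrt (- r * l)"
    have s2: "\<sigma>^2 = - r * l" unfolding \<sigma>_def by (rule power2_csqrt)
    have sn0: "\<sigma> \<noteq> 0" using s2 False l0 by auto
    define s where "s = 1 / \<sigma>"
    have ss: "s * \<sigma> = 1" using sn0 unfolding s_def by simp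
    define A where "A = l^4 + r * l^2"
    let ?X = "M l 1 0 n" and ?Y = "M l 0 r n" and ?T = "M ((A - n) * s) s (r * l * s) 0"
    have dT: "(A - n) * s * 0 - s * (r * l * s) = 1" using ss s2 by algebra
    have inv: "matrix_inv ?X = M n (-1) 0 l" using M_inv[of l n 1 0] ln by simp
    have invT: "matrix_inv ?T = M 0 (-s) (-(r * l * s)) ((A - n) * s)" using M_inv[OF dT] by simp
    have "fig8_rep ?X ?Y ?T"
      unfolding fig8_rep_def SL2_def using ln dT
      apply (simp add: inv invT M_eq_iff)
      using ln ss s2 cc unfolding r_def A_def by algebra
    moreover have "trace ?X = a" "trace ?Y = a" "trace (?X ** ?Y) = c"
      using lna unfolding r_def by (simp_all add: power2_eq_square)
    ultimately show ?thesis unfolding c_def by blast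
  qed
qed

theorem lemma6p2:
  shows "{(trace X, trace Y, trace (X ** Y)) | X Y T. fig8_rep X Y T}
       = {(a, a, a / (a - 1)) | a :: complex. a \<noteq> 1}"
proof
  show "{(trace X, trace Y, trace (X ** Y)) | X Y T. fig8_rep X Y T}
       \<subseteq> {(a, a, a / (a - 1)) | a :: complex. a \<noteq> 1}"
  proof
    fix p assume "p \<in> {(trace X, trace Y, trace (X ** Y)) | X Y T. fig8_rep X Y T}"
    then obtain X Y T where p: "p = (trace X, trace Y, trace (X ** Y))" and f: "fig8_rep X Y T" by blast
    show "p \<in> {(a, a, a / (a - 1)) | a :: complex. a \<noteq> 1}"
      using forward[OF f] p by auto
  qed
next
  show "{(a, a, a / (a - 1)) | a :: complex. a \<noteq> 1}
       \<subseteq> {(trace X, trace Y, trace (X ** Y)) | X Y T. fig8_rep X Y T}"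
  proof
    fix p assume "p \<in> {(a, a, a / (a - 1)) | a :: complex. a \<noteq> 1}"
    then obtain a where p: "p = (a, a, a / (a - 1))" and a: "a \<noteq> 1" by blast
    from backward[OF a] obtain X0 Y0 T0 where h: "fig8_rep X0 Y0 T0" "trace X0 = a" "trace Y0 = a"
      "trace (X0 ** Y0) = a / (a - 1)" by blast
    have "p = (trace X0, trace Y0, trace (X0 ** Y0))" using h p by simp
    thus "p \<in> {(trace X, trace Y, trace (X ** Y)) | X Y T. fig8_rep X Y T}" using h(1) by blast
  qed
qed

end
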